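(* Let $X \subset \mathbb{R}^{2n}$ be a symplectically self-polar convex body with $C^1$-smooth boundary and let $Y=\{x+f(x): x\in\partial X\}$. For every $x\in\partial X$, the line $\{x+tf(x): t\in\mathbb{R}\}$ intersects $Y$ in exactly the two points $x+f(x)$ and $x-f(x)$. If moreover $\partial X$ is $C^2$-smooth, then each such line is transversal to $Y$ at both intersection points.
   Context: $\mathbb{R}^{2n}\cong\mathbb{C}^n$, $J$ is multiplication by $\sqrt{-1}$, $\omega(u,v)=\langle Ju,v\rangle$. For a convex body $X$ with origin in its interior, $X^\omega=\{y: \omega(x,y)\le 1\ \forall x\in X\}$; $X$ is symplectically self-polar if $X=X^\omega$. For $C^1$ boundary, $f\colon\partial X\to\partial X^\omega$ assigns to $x$ the unique $f(x)\in X^\omega$ with $\omega(x,f(x))=1$; when $X=X^\omega$, $f$ maps $\partial X$ to itself, and for $C^2$ boundary $f$ is $C^1$ and $Y$ is a $C^1$ embedded hypersurface. *)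

theory Defs
  imports "HOL-Analysis.Analysis"
begin

text \<open>R^{2n} is identified with C^n, modelled as complex ^ 'n (a real inner product space).\<close>

definition cJ :: "complex ^ 'n \<Rightarrow> complex ^ 'n" where
  "cJ u = (\<chi> i. \<i> * u $ i)"

definition omega :: "complex ^ 'n \<Rightarrow> complex ^ 'n \<Rightarrow> real" where
  "omega u v = inner (cJ u) v"

definition convex_body :: "'a::euclidean_space set \<Rightarrow> bool" where
  "convex_body X \<longleftrightarrow> compact X \<and> convex X \<and> interior X \<noteq> {}"

definition sympolar :: "(complex ^ 'n) set \<Rightarrow> (complex ^ 'n) set" where
  "sympolar X = {y. \<forall>x\<in>X. omega x y \<le> 1}"

definition sym_f :: "(complex ^ 'n) set \<Rightarrow> complex ^ 'n \<Rightarrow> complex ^ 'n" where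
  "sym_f X x = (THE y. y \<in> sympolar X \<and> omega x y = 1)"

text \<open>C^1 and C^2 maps on open sets (finite dimensional, so pointwise continuity
of the derivative applied to each fixed vector is continuity of the derivative).\<close>

definition C1_on :: "'a::euclidean_space set \<Rightarrow> ('a \<Rightarrow> 'b::euclidean_space) \<Rightarrow> bool" where
  "C1_on U F \<longleftrightarrow> (\<exists>F'. (\<forall>x\<in>U. (F has_derivative F' x) (at x)) \<and>
                        (\<forall>v. continuous_on U (\<lambda>x. F' x v)))"

definition C2_on :: "'a::euclidean_space set \<Rightarrow> ('a \<Rightarrow> 'b::euclidean_space) \<Rightarrow> bool" where
  "C2_on U F \<longleftrightarrow> (\<exists>F'. (\<forall>x\<in>U. (F has_derivative F' x) (at x)) \<and>
                        (\<forall>v. C1_on U (\<lambda>x. F' x v)))"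

definition boundary_with :: "(('a::euclidean_space) set \<Rightarrow> ('a \<Rightarrow> real) \<Rightarrow> bool) \<Rightarrow> 'a set \<Rightarrow> bool" where
  "boundary_with Ck X \<longleftrightarrow> (\<forall>p\<in>frontier X. \<exists>U g. open U \<and> p \<in> U \<and> Ck U g \<and>
      (\<forall>x\<in>U. \<forall>D. (g has_derivative D) (at x) \<longrightarrow> D \<noteq> (\<lambda>h. 0)) \<and>
      X \<inter> U = {x\<in>U. g x \<le> 0})"

abbreviation C1_boundary :: "'a::euclidean_space set \<Rightarrow> bool" where
  "C1_boundary X \<equiv> boundary_with C1_on X"

abbreviation C2_boundary :: "'a::euclidean_space set \<Rightarrow> bool" where
  "C2_boundary X \<equiv> boundary_with C2_on X"

definition tangent_space :: "'a::real_normed_vector set \<Rightarrow> 'a \<Rightarrow> 'a set" where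
  "tangent_space Y y = {v. \<exists>\<gamma> e. e > 0 \<and> \<gamma> 0 = y \<and> (\<forall>t\<in>{-e<..<e}. \<gamma> t \<in> Y) \<and>
        (\<gamma> has_vector_derivative v) (at 0)}"

definition transversal_line_at :: "'a::real_normed_vector set \<Rightarrow> 'a \<Rightarrow> 'a \<Rightarrow> bool" where
  "transversal_line_at Y y d \<longleftrightarrow> y \<in> Y \<and> d \<notin> tangent_space Y y"

end

theory Submission
  imports Defs
begin


lemma cJ_nth[simp]: "cJ u $ i = \<i> * u $ i" by (simp add: cJ_def)

lemma cJ_cJ[simp]: "cJ (cJ u) = - u"
  by (simp add: vec_eq_iff)

lemma cJ_add[simp]: "cJ (u + v) = cJ u + cJ v"
  by (simp add: vec_eq_iff algebra_simps)
lemma cJ_scaleR[simp]: "cJ (c *\<^sub>R u) = c *\<^sub>R cJ u"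
  by (simp add: vec_eq_iff scaleR_conv_of_real)
lemma cJ_minus[simp]: "cJ (- u) = - cJ u"
  by (simp add: vec_eq_iff)
lemma cJ_diff[simp]: "cJ (u - v) = cJ u - cJ v"
  by (simp add: vec_eq_iff algebra_simps)
lemma cJ_zero[simp]: "cJ 0 = 0"
  by (simp add: vec_eq_iff)

lemma inner_cJ_left: "inner (cJ u) w = - inner u (cJ w)"
  by (simp add: inner_vec_def inner_complex_def sum_negf[symmetric] algebra_simps)

lemma inner_cJ_cJ[simp]: "inner (cJ u) (cJ w) = inner u w"
  by (simp add: inner_vec_def inner_complex_def algebra_simps)

lemma norm_cJ[simp]: "norm (cJ u) = norm u"
  by (simp add: norm_eq_sqrt_inner)

lemma omega_antisym: "omega u v = - omega v u"
proof -
  have "inner (cJ u) v = - inner u (cJ v)" by (rule inner_cJ_left)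
  moreover have "inner (cJ v) u = inner u (cJ v)" by (rule inner_commute)
  ultimately show ?thesis unfolding omega_def by simp
qed

lemma omega_self[simp]: "omega u u = 0"
  using omega_antisym[of u u] by simp

lemma omega_add_left[simp]: "omega (u + u') v = omega u v + omega u' v"
  by (simp add: omega_def inner_add_left)
lemma omega_add_right[simp]: "omega u (v + v') = omega u v + omega u v'"
  by (simp add: omega_def inner_add_right)
lemma omega_diff_left[simp]: "omega (u - u') v = omega u v - omega u' v"
  by (simp add: omega_def inner_diff_left)
lemma omega_diff_right[simp]: "omega u (v - v') = omega u v - omega u v'"
  by (simp add: omega_def inner_diff_right)
lemma omega_minus_left[simp]: "omega (- u) v = - omega u v"
  by (simp add: omega_def)
lemma omega_minus_right[simp]: "omega u (- v) = - omega u v"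
  by (simp add: omega_def)
lemma omega_scaleR_left[simp]: "omega (c *\<^sub>R u) v = c * omega u v"
  by (simp add: omega_def)
lemma omega_scaleR_right[simp]: "omega u (c *\<^sub>R v) = c * omega u v"
  by (simp add: omega_def)
lemma omega_zero[simp]: "omega 0 v = 0" "omega u 0 = 0"
  by (simp_all add: omega_def)

lemma omega_bound: "\<bar>omega u v\<bar> \<le> norm u * norm v"
  unfolding omega_def using Cauchy_Schwarz_ineq2[of "cJ u" v] by simp

lemma omega_le: "omega u v \<le> norm u * norm v"
  using omega_bound[of u v] by simp

lemma omega_mJ: "omega (- cJ w) w = (norm w)^2"
  by (simp add: omega_def power2_norm_eq_inner)

lemma omega_cJ_self[simp]: "omega (cJ w) w = - ((norm w)^2)"
  by (simp add: omega_def power2_norm_eq_inner)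

lemma omega_inner: "omega v y = inner v (- cJ y)"
  unfolding omega_def by (simp add: inner_cJ_left)

lemma halfspace:
  fixes a b :: "'a::real_inner"
  assumes a0: "a \<noteq> 0" and H: "\<forall>v. inner a v < 0 \<longrightarrow> inner b v \<le> 0"
  shows "b = (inner b a / inner a a) *\<^sub>R a"
proof (rule ccontr)
  define k where "k = inner b a / inner a a"
  define P where "P = b - k *\<^sub>R a"
  have aa: "inner a a > 0" using a0 by simp
  have aP: "inner a P = 0"
    using aa by (simp add: P_def k_def inner_diff_right inner_commute)
  assume "b \<noteq> (inner b a / inner a a) *\<^sub>R a"
  then have "P \<noteq> 0" by (simp add: P_def k_def)
  then have PP: "inner P P > 0" by simp
  define e where "e = inner P P / (2 * (\<bar>inner b a\<bar> + 1))"
  have e0: "e > 0" using PP by (simp add: e_def)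
  define v where "v = P - e *\<^sub>R a"
  have "inner a v = - e * inner a a" using aP by (simp add: v_def inner_diff_right)
  also have "\<dots> < 0" using e0 aa by simp
  finally have "inner b v \<le> 0" using H by blast
  moreover have "inner b P = inner P P"
  proof -
    have "b = P + k *\<^sub>R a" by (simp add: P_def)
    then have "inner b P = inner P P + k * inner a P"
      by (simp add: inner_add_left)
    then show ?thesis using aP by simp
  qed
  ultimately have "inner P P \<le> e * inner b a" by (simp add: v_def inner_diff_right)
  also have "\<dots> \<le> e * \<bar>inner b a\<bar>" using e0 by (simp add: mult_left_mono)
  also have "\<dots> < inner P P"
  proof -
    have "e * \<bar>inner b a\<bar> = inner P P * (\<bar>inner b a\<bar> / (2 * (\<bar>inner b a\<bar> + 1)))"
      by (simp add: e_def)
    also have "\<dots> < inner P P * 1"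
      using PP by (intro mult_strict_left_mono) (auto simp: field_simps)
    finally show ?thesis by simp
  qed
  finally show False by simp
qed

lemma gradient_repr:
  fixes D :: "'a::euclidean_space \<Rightarrow> real"
  assumes "bounded_linear D"
  shows "D h = inner (\<Sum>b\<in>Basis. D b *\<^sub>R b) h"
proof -
  have lin: "linear D" using bounded_linear.linear[OF assms] .
  have "D h = D (\<Sum>b\<in>Basis. (h \<bullet> b) *\<^sub>R b)" by (simp add: euclidean_representation)
  also have "\<dots> = (\<Sum>b\<in>Basis. D ((h \<bullet> b) *\<^sub>R b))" by (simp add: linear_sum[OF lin] o_def)
  also have "\<dots> = (\<Sum>b\<in>Basis. (h \<bullet> b) * D b)" by (simp add: linear.scaleR[OF lin])
  also have "\<dots> = inner (\<Sum>b\<in>Basis. D b *\<^sub>R b) h"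
    unfolding inner_sum_left inner_scaleR_left by (simp add: inner_commute mult.commute)
  finally show ?thesis .
qed

lemma deriv_approx:
  assumes "(f has_derivative f') (at x)" "e > 0"
  obtains d where "d > 0" "\<And>y. norm (y - x) < d \<Longrightarrow> norm (f y - f x - f' (y - x)) \<le> e * norm (y - x)"
proof -
  have "\<forall>e>0. \<exists>d>0. \<forall>y. norm (y - x) < d \<longrightarrow> norm (f y - f x - f' (y - x)) \<le> e * norm (y - x)"
    using assms(1) unfolding has_derivative_at_alt by (rule conjunct2)
  then have "\<exists>d>0. \<forall>y. norm (y - x) < d \<longrightarrow> norm (f y - f x - f' (y - x)) \<le> e * norm (y - x)"
    using assms(2) by blast
  then show ?thesis using that by blast
qed

lemma descent:
  fixes g :: "'a::real_normed_vector \<Rightarrow> real"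
  assumes U: "open U" "x \<in> U" and gd: "(g has_derivative D) (at x)" and gx: "g x \<le> 0"
    and Dv: "D v < 0"
  shows "\<exists>t>0. x + t *\<^sub>R v \<in> U \<and> g (x + t *\<^sub>R v) \<le> 0"
proof -
  have bl: "bounded_linear D" using gd has_derivative_bounded_linear by blast
  then have lin: "linear D" using bounded_linear.linear by blast
  have "v \<noteq> 0" using Dv linear_0[OF lin] by auto
  then have nv: "norm v > 0" by simp
  define e where "e = - D v / (2 * norm v)"
  have e0: "e > 0" unfolding e_def by (rule divide_pos_pos) (use Dv nv in auto)
  obtain d where d0: "d > 0" and dH: "\<And>y. norm (y - x) < d \<Longrightarrow> norm (g y - g x - D (y - x)) \<le> e * norm (y - x)"
    using gd e0 unfolding has_derivative_at_alt by blast
  obtain \<rho> where \<rho>0: "\<rho> > 0" and \<rho>U: "ball x \<rho> \<subseteq> U" using U open_contains_ball by blast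
  define t where "t = min d \<rho> / (2 * norm v)"
  have t0: "t > 0" using d0 \<rho>0 nv by (simp add: t_def)
  have ntv: "norm (t *\<^sub>R v) = min d \<rho> / 2" using nv t0 d0 \<rho>0 by (simp add: t_def)
  have "x + t *\<^sub>R v \<in> ball x \<rho>" using ntv d0 \<rho>0 by (simp add: dist_norm)
  then have inU: "x + t *\<^sub>R v \<in> U" using \<rho>U by blast
  have "norm ((x + t *\<^sub>R v) - x) < d" using ntv d0 \<rho>0 by simp
  then have "norm (g (x + t *\<^sub>R v) - g x - D (t *\<^sub>R v)) \<le> e * norm (t *\<^sub>R v)"
    using dH[of "x + t *\<^sub>R v"] by simp
  moreover have "D (t *\<^sub>R v) = t * D v" using linear.scaleR[OF lin] by simp
  moreover have "e * norm (t *\<^sub>R v) = - t * D v / 2" using nv t0 by (simp add: e_def)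
  ultimately have "g (x + t *\<^sub>R v) \<le> g x + t * D v / 2" by (simp add: abs_le_iff)
  also have "\<dots> \<le> 0"
  proof -
    have "t * D v < 0" using t0 Dv by (simp add: mult_pos_neg)
    then show ?thesis using gx by linarith
  qed
  finally show ?thesis using t0 inU by blast
qed




locale SP =
  fixes X :: "(complex ^ 'n) set"
  assumes cb: "convex_body X" and zi: "0 \<in> interior X" and sp: "sympolar X = X"
begin

lemma memX: "w \<in> X \<longleftrightarrow> (\<forall>z\<in>X. omega z w \<le> 1)"
proof -
  have "w \<in> X \<longleftrightarrow> w \<in> sympolar X" using sp by simp
  then show ?thesis unfolding sympolar_def by simp
qed

lemma le1: "z \<in> X \<Longrightarrow> w \<in> X \<Longrightarrow> omega z w \<le> 1"
  using memX by blast

lemma gem1: "z \<in> X \<Longrightarrow> w \<in> X \<Longrightarrow> -1 \<le> omega z w"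
  using le1[of w z] omega_antisym[of z w] by linarith

lemma symm: assumes w: "w \<in> X" shows "- w \<in> X"
proof -
  have "\<forall>z\<in>X. omega z (-w) \<le> 1"
  proof
    fix z assume "z \<in> X"
    then have "omega w z \<le> 1" using le1 w by blast
    then show "omega z (-w) \<le> 1" using omega_antisym[of z w] by simp
  qed
  then show ?thesis using memX by blast
qed

lemma closedX: "closed X" using cb unfolding convex_body_def by (simp add: compact_imp_closed)
lemma compactX: "compact X" using cb unfolding convex_body_def by simp

lemma boundX: "\<exists>R>0. \<forall>x\<in>X. norm x \<le> R"
  using compactX compact_imp_bounded bounded_pos by blast

lemma fr_X: "x \<in> frontier X \<Longrightarrow> x \<in> X"
  using frontier_subset_closed[OF closedX] by blast

lemma fr_nz: "x \<in> frontier X \<Longrightarrow> x \<noteq> 0"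
  using zi unfolding frontier_def by auto

lemma zeroX: "0 \<in> X" using zi interior_subset by blast

lemma fr_attain: assumes x: "x \<in> frontier X" shows "\<exists>z\<in>X. omega z x = 1"
proof -
  have cont: "continuous_on X (\<lambda>z. omega z x)"
  proof -
    have eq: "(\<lambda>z. omega z x) = (\<lambda>z. - inner z (cJ x))"
      by (simp add: omega_def inner_cJ_left)
    show ?thesis unfolding eq by (intro continuous_intros)
  qed
  obtain z0 where z0: "z0 \<in> X" and zmax: "\<forall>z\<in>X. omega z x \<le> omega z0 x"
    using continuous_attains_sup[OF compactX _ cont] zeroX by blast
  define s where "s = omega z0 x"
  have s1: "s \<le> 1" using le1 z0 fr_X[OF x] by (simp add: s_def)
  show ?thesis
  proof (cases "s = 1")
    case True then show ?thesis using z0 by (auto simp: s_def)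
  next
    case False
    with s1 have s1': "s < 1" by simp
    obtain R where R0: "R > 0" and RX: "\<forall>x\<in>X. norm x \<le> R" using boundX by blast
    define d where "d = (1 - s) / R"
    have d0: "d > 0" using s1' R0 by (simp add: d_def)
    have "ball x d \<subseteq> X"
    proof
      fix w assume "w \<in> ball x d"
      then have nw: "norm (w - x) < d" by (simp add: dist_norm norm_minus_commute)
      have "\<forall>z\<in>X. omega z w \<le> 1"
      proof
        fix z assume z: "z \<in> X"
        have "omega z w = omega z x + omega z (w - x)" by simp
        also have "\<dots> \<le> s + norm z * norm (w - x)"
        proof -
          have "omega z x \<le> s" using zmax z by (simp add: s_def)
          then show ?thesis using omega_le[of z "w - x"] by linarith
        qed
        also have "\<dots> \<le> s + R * norm (w - x)"
          using RX z by (simp add: mult_right_mono)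
        also have "\<dots> \<le> s + R * d" using nw R0 by simp
        also have "\<dots> = 1" using R0 by (simp add: d_def)
        finally show "omega z w \<le> 1" .
      qed
      then show "w \<in> X" using memX by blast
    qed
    then have "x \<in> interior X" using d0 mem_interior by blast
    then show ?thesis using x unfolding frontier_def by simp
  qed
qed

lemma fr_by_omega:
  assumes z: "z \<in> X" and w: "w \<in> X" "w \<noteq> 0" and zw: "omega z w = 1"
  shows "z \<in> frontier X"
proof -
  have "z \<notin> interior X"
  proof
    assume "z \<in> interior X"
    then obtain e where e0: "e > 0" and eb: "ball z e \<subseteq> X" using mem_interior by blast
    have nw: "norm w > 0" using w by simp
    define z' where "z' = z + (e / 2 / norm w) *\<^sub>R (- cJ w)"
    have "norm ((e / 2 / norm w) *\<^sub>R (- cJ w)) = e / 2" using nw e0 by simp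
    then have "z' \<in> ball z e" using e0 by (simp add: z'_def dist_norm)
    then have "z' \<in> X" using eb by blast
    then have "omega z' w \<le> 1" using le1 w by blast
    moreover have "omega z' w = 1 + (e / 2 / norm w) * (norm w)^2"
      using zw by (simp add: z'_def omega_mJ)
    moreover have "(e / 2 / norm w) * (norm w)^2 > 0" using e0 nw by simp
    ultimately show False by simp
  qed
  then show ?thesis using z closedX unfolding frontier_def by (simp add: closure_closed)
qed

lemma ex_f: assumes x: "x \<in> frontier X" shows "\<exists>y\<in>X. omega x y = 1"
proof -
  obtain z where "z \<in> X" "omega z x = 1" using fr_attain[OF x] by blast
  then have "- z \<in> X" "omega x (- z) = 1" using symm omega_antisym[of x z] by auto
  then show ?thesis by blast
qed

end

locale SP1 = SP X for X :: "(complex ^ 'n) set" +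
  assumes c1: "C1_boundary X"
begin

lemma uniq:
  assumes x: "x \<in> frontier X" and y1: "y1 \<in> X" "omega x y1 = 1" and y2: "y2 \<in> X" "omega x y2 = 1"
  shows "y1 = y2"
proof -
  have ex: "\<exists>U (g :: complex ^ 'n \<Rightarrow> real). open U \<and> x \<in> U \<and> C1_on U g \<and>
      (\<forall>z\<in>U. \<forall>D. (g has_derivative D) (at z) \<longrightarrow> D \<noteq> (\<lambda>h. 0)) \<and>
      X \<inter> U = {z\<in>U. g z \<le> 0}"
    using c1 x unfolding boundary_with_def by (rule bspec)
  obtain U where "\<exists>(g :: complex ^ 'n \<Rightarrow> real). open U \<and> x \<in> U \<and> C1_on U g \<and>
      (\<forall>z\<in>U. \<forall>D. (g has_derivative D) (at z) \<longrightarrow> D \<noteq> (\<lambda>h. 0)) \<and>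
      X \<inter> U = {z\<in>U. g z \<le> 0}" using ex by (rule exE)
  then obtain g :: "complex ^ 'n \<Rightarrow> real" where A: "open U \<and> x \<in> U \<and> C1_on U g \<and>
      (\<forall>z\<in>U. \<forall>D. (g has_derivative D) (at z) \<longrightarrow> D \<noteq> (\<lambda>h. 0)) \<and>
      X \<inter> U = {z\<in>U. g z \<le> 0}" by (rule exE)
  from A have U1: "open U" by (elim conjE)
  from A have U2: "x \<in> U" by (elim conjE)
  note U = U1 U2
  from A have C: "C1_on U g" by (elim conjE)
  from A have nz: "\<forall>z\<in>U. \<forall>D. (g has_derivative D) (at z) \<longrightarrow> D \<noteq> (\<lambda>h. 0)" by (elim conjE)
  from A have XU: "X \<inter> U = {z\<in>U. g z \<le> 0}" by (elim conjE)
  from C obtain F' where F'c: "(\<forall>z\<in>U. (g has_derivative F' z) (at z)) \<and> (\<forall>v. continuous_on U (\<lambda>z. F' z v))"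
    unfolding C1_on_def by (rule exE)
  then have F': "\<forall>z\<in>U. (g has_derivative F' z) (at z)" by (rule conjunct1)
  define D where "D = F' x"
  have gd: "(g has_derivative D) (at x)" using F' U by (simp add: D_def)
  have bl0: "bounded_linear (F' x)" using gd unfolding D_def by (rule has_derivative_bounded_linear)
  have bl: "bounded_linear D" using bl0 by (simp add: D_def)
  define a where "a = (\<Sum>b\<in>Basis. D b *\<^sub>R b)"
  have Da: "\<And>h. D h = inner a h" unfolding a_def by (rule gradient_repr[OF bl])
  have a0: "a \<noteq> 0"
  proof
    assume "a = 0"
    then have "D = (\<lambda>h. 0)" using Da by (simp add: fun_eq_iff)
    then show False using nz gd U by blast
  qed
  have gx: "g x \<le> 0" using XU fr_X[OF x] U by blast
  have key: "\<And>y. y \<in> X \<Longrightarrow> omega x y = 1 \<Longrightarrow> - cJ y = (inner (- cJ y) a / inner a a) *\<^sub>R a"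
  proof -
    fix y assume y: "y \<in> X" "omega x y = 1"
    show "- cJ y = (inner (- cJ y) a / inner a a) *\<^sub>R a"
    proof (rule halfspace[OF a0], intro allI impI)
      fix v assume av: "inner a v < 0"
      then have "D v < 0" using Da by simp
      then obtain t where t0: "t > 0" and tU: "x + t *\<^sub>R v \<in> U" and tg: "g (x + t *\<^sub>R v) \<le> 0"
        using descent[OF U gd gx] by blast
      then have "x + t *\<^sub>R v \<in> X" using XU by blast
      then have "omega (x + t *\<^sub>R v) y \<le> 1" using le1 y by blast
      then have "t * omega v y \<le> 0" using y by simp
      then have "omega v y \<le> 0" using t0 by (simp add: mult_le_0_iff)
      then show "inner (- cJ y) v \<le> 0" using omega_inner[of v y] by (simp add: inner_commute)
    qed
  qed
  define k1 where "k1 = inner (- cJ y1) a / inner a a"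
  define k2 where "k2 = inner (- cJ y2) a / inner a a"
  have e1: "- cJ y1 = k1 *\<^sub>R a" using key y1 by (simp add: k1_def)
  have e2: "- cJ y2 = k2 *\<^sub>R a" using key y2 by (simp add: k2_def)
  have "omega x y1 = inner x (- cJ y1)" by (rule omega_inner)
  then have h1: "k1 * inner x a = 1" using e1 y1 by simp
  have "omega x y2 = inner x (- cJ y2)" by (rule omega_inner)
  then have h2: "k2 * inner x a = 1" using e2 y2 by simp
  have "inner x a \<noteq> 0" using h1 by auto
  then have "k1 = k2" using h1 h2 by (metis mult_right_cancel)
  then have "cJ y1 = cJ y2" using e1 e2 by (metis minus_equation_iff)
  then have "cJ (cJ y1) = cJ (cJ y2)" by simp
  then show ?thesis by simp
qed

abbreviation f where "f \<equiv> sym_f X"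

lemma f_char: assumes x: "x \<in> frontier X" and y: "y \<in> X" "omega x y = 1"
  shows "f x = y"
  unfolding sym_f_def sp
proof (rule the_equality)
  show "y \<in> X \<and> omega x y = 1" using y by simp
  fix y' assume "y' \<in> X \<and> omega x y' = 1"
  then show "y' = y" using uniq[OF x] y by blast
qed

lemma f_prop: assumes x: "x \<in> frontier X" shows "f x \<in> X" "omega x (f x) = 1"
proof -
  obtain y where y: "y \<in> X" "omega x y = 1" using ex_f[OF x] by blast
  then have "f x = y" using f_char[OF x] by blast
  then show "f x \<in> X" "omega x (f x) = 1" using y by auto
qed

lemma f_nz: "x \<in> frontier X \<Longrightarrow> f x \<noteq> 0"
  using f_prop(2)[of x] by auto

lemma f_negf: assumes x: "x \<in> frontier X"
  shows "- f x \<in> frontier X" "f (- f x) = x"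
proof -
  have m: "- f x \<in> X" using symm f_prop[OF x] by blast
  have o: "omega (- f x) x = 1" using f_prop(2)[OF x] omega_antisym[of x "f x"] by simp
  show fr: "- f x \<in> frontier X" using fr_by_omega[OF m fr_X[OF x] fr_nz[OF x] o] .
  show "f (- f x) = x" using f_char[OF fr fr_X[OF x] o] .
qed

lemma neg_fr: assumes x: "x \<in> frontier X" shows "- x \<in> frontier X"
proof -
  have m: "- x \<in> X" using symm fr_X[OF x] by blast
  have m2: "- f x \<in> X" using symm f_prop[OF x] by blast
  have "- f x \<noteq> 0" using f_nz[OF x] by simp
  moreover have "omega (- x) (- f x) = 1" using f_prop(2)[OF x] by simp
  ultimately show ?thesis using fr_by_omega[OF m m2] by blast
qed

lemma line_t:
  assumes x: "x \<in> frontier X" and x': "x' \<in> frontier X"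
    and eq: "x + t *\<^sub>R f x = x' + f x'"
  shows "t = 1 \<or> t = -1"
proof -
  define y where "y = f x"
  define y' where "y' = f x'"
  have yX: "y \<in> X" and oxy: "omega x y = 1" using f_prop[OF x] by (auto simp: y_def)
  have y'X: "y' \<in> X" and oxy': "omega x' y' = 1" using f_prop[OF x'] by (auto simp: y'_def)
  have xX: "x \<in> X" and x'X: "x' \<in> X" using fr_X x x' by auto
  have w: "x + t *\<^sub>R y = x' + y'" using eq by (simp add: y_def y'_def)
  define p where "p = omega x' y"
  define q where "q = omega y' y"
  have E1: "omega x' x + t * p = 1"
  proof -
    have "omega x' (x + t *\<^sub>R y) = omega x' (x' + y')" using w by simp
    then show ?thesis using oxy' by (simp add: p_def)
  qed
  have E2: "omega y' x + t * q = -1"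
  proof -
    have "omega y' (x + t *\<^sub>R y) = omega y' (x' + y')" using w by simp
    then show ?thesis using oxy' omega_antisym[of y' x'] by (simp add: q_def)
  qed
  have E3: "p + q = 1"
  proof -
    have "omega y (x + t *\<^sub>R y) = omega y (x' + y')" using w by simp
    then show ?thesis using oxy omega_antisym[of y x] omega_antisym[of y x'] omega_antisym[of y y']
      by (simp add: p_def q_def)
  qed
  have b1: "-1 \<le> omega x' x" "omega x' x \<le> 1" using le1 gem1 xX x'X by auto
  have b2: "-1 \<le> omega y' x" "omega y' x \<le> 1" using le1 gem1 xX y'X by auto
  have b3: "p \<le> 1" "q \<le> 1" using le1 x'X yX y'X by (auto simp: p_def q_def)
  have yfr: "- y \<in> frontier X" and fny: "f (- y) = x" using f_negf[OF x] by (auto simp: y_def)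
  consider "t > 0" | "t < 0" | "t = 0" by linarith
  then show ?thesis
  proof cases
    case 1
    have "t * q \<le> 0" using E2 b2 by linarith
    then have "q \<le> 0" using 1 by (simp add: mult_le_0_iff)
    have "t * p \<ge> 0" using E1 b1 by linarith
    then have "p \<ge> 0" using 1 by (simp add: zero_le_mult_iff)
    have p1: "p = 1" using E3 b3 \<open>q \<le> 0\<close> by linarith
    have "omega (- y) x' = 1" using p1 omega_antisym[of y x'] by (simp add: p_def)
    then have "f (- y) = x'" using f_char[OF yfr x'X] by blast
    then have "x' = x" using fny by simp
    then have "y' = y" by (simp add: y_def y'_def)
    then have "t *\<^sub>R y = y" using w \<open>x' = x\<close> by simp
    then have "(t - 1) *\<^sub>R y = 0" by (simp add: algebra_simps)
    then have "t = 1" using f_nz[OF x] by (simp add: y_def)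
    then show ?thesis by simp
  next
    case 2
    have "t * q \<le> 0" using E2 b2 by linarith
    then have "q \<ge> 0" using 2 by (simp add: mult_le_0_iff)
    have "t * p \<ge> 0" using E1 b1 by linarith
    then have "p \<le> 0" using 2 by (simp add: zero_le_mult_iff)
    have q1: "q = 1" using E3 b3 \<open>p \<le> 0\<close> by linarith
    have "omega (- y) y' = 1" using q1 omega_antisym[of y y'] by (simp add: q_def)
    then have "f (- y) = y'" using f_char[OF yfr y'X] by blast
    then have "y' = x" using fny by simp
    then have "x' = t *\<^sub>R y" using w by (simp add: algebra_simps)
    then have "omega x' y' = - t" using \<open>y' = x\<close> oxy omega_antisym[of y x] by simp
    then show ?thesis using oxy' by simp
  next
    case 3
    have "omega x' x = 1" using E1 3 by simp
    then have o1: "omega (- x) x' = 1" using omega_antisym[of x x'] by simp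
    have mxX: "- x \<in> X" using symm xX by blast
    have mxfr: "- x \<in> frontier X" using neg_fr[OF x] .
    have "f (- x) = x'" using f_char[OF mxfr x'X o1] .
    moreover have "f (- x) = - y"
      using f_char[OF mxfr symm[OF yX]] oxy by simp
    ultimately have xm: "x' = - y" by simp
    have "omega y' x = -1" using E2 3 by simp
    then have "omega x y' = 1" using omega_antisym[of x y'] by simp
    then have "f x = y'" using f_char[OF x y'X] by blast
    then have "y' = y" by (simp add: y_def)
    then have "x = 0" using w xm 3 by simp
    then show ?thesis using fr_nz[OF x] by simp
  qed
qed

end



context SP begin

lemma ballpolar:
  assumes ball: "cball c r \<subseteq> X" and r0: "r \<ge> 0" and w: "w \<in> X"
  shows "omega c w + r * norm w \<le> 1"
proof (cases "w = 0")
  case True then show ?thesis by simp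
next
  case False
  then have nw: "norm w > 0" by simp
  define b where "b = c + (r / norm w) *\<^sub>R (- cJ w)"
  have "dist c b = r" using nw r0 by (simp add: b_def dist_norm)
  then have "b \<in> X" using ball by auto
  then have "omega b w \<le> 1" using le1 w by blast
  moreover have "omega b w = omega c w + (r / norm w) * (norm w)^2"
    by (simp add: b_def)
  moreover have "(r / norm w) * (norm w)^2 = r * norm w" using nw by (simp add: power2_eq_square)
  ultimately show ?thesis by simp
qed

lemma core:
  assumes R0: "R > 0" and RX: "\<forall>x\<in>X. norm x \<le> R"
    and ball: "cball c r \<subseteq> X" and r0: "r > 0" and db: "dist b0 c = r"
    and aX: "a \<in> X" and ba: "omega b0 a = 1" and zX: "z \<in> X"
    and s0: "s > 0" and Go0: "Go \<ge> 0"
    and h4: "(1 + s) * (1 - omega b0 z) + Go \<le> norm (z - a) * norm E"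
    and h5: "Go \<le> - s + R * (norm E + norm (z - a))"
    and E1: "R * norm E \<le> 1/2"
    and E2: "R * (1 + 8 * (R^2 + 1)^2 * R / r) * norm E < s"
  shows False
proof -
  define G where "G = 1 - omega b0 z"
  define K where "K = R^2 + 1"
  have K0: "K > 0" unfolding K_def using zero_le_power2[of R] by linarith
  have "b0 \<in> cball c r" using db by (simp add: dist_commute)
  then have b0X: "b0 \<in> X" using ball by blast
  have nb0: "norm b0 \<le> R" and na: "norm a \<le> R" and nz: "norm z \<le> R"
    using RX b0X aX zX by auto
  define m where "m = cJ (b0 - c)"
  have nm: "norm m = r" unfolding m_def norm_cJ using db by (simp add: dist_norm)
  have mw: "\<And>w. omega b0 w = omega c w + inner m w"
    by (simp add: m_def omega_def inner_diff_left)
  have pa: "omega c a + r * norm a \<le> 1" using ballpolar[OF ball _ aX] r0 by simp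
  have ma: "r * norm a \<le> inner m a" using pa mw[of a] ba by linarith
  have pz: "omega c z + r * norm z \<le> 1" using ballpolar[OF ball _ zX] r0 by simp
  have Gz: "r * norm z \<le> G + inner m z" using pz mw[of z] by (simp add: G_def)
  have a0: "a \<noteq> 0" using ba by auto
  have na0: "norm a > 0" using a0 by simp
  have mpar: "m = (r / norm a) *\<^sub>R a"
  proof -
    define u where "u = norm a *\<^sub>R m - r *\<^sub>R a"
    have "inner u u = (norm a)^2 * inner m m - 2 * (norm a * r) * inner m a + r^2 * inner a a"
      by (simp add: u_def inner_diff_left inner_diff_right inner_commute[of a m] power2_eq_square algebra_simps)
    also have "\<dots> = 2 * (norm a * r) * (r * norm a) - 2 * (norm a * r) * inner m a"
      using nm by (simp add: power2_norm_eq_inner[symmetric] power2_eq_square algebra_simps)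
    also have "\<dots> \<le> 0"
    proof -
      have "(norm a * r) * (r * norm a) \<le> (norm a * r) * inner m a"
        using ma na0 r0 by (intro mult_left_mono) auto
      then show ?thesis by simp
    qed
    finally have "inner u u \<le> 0" .
    then have "u = 0" by (metis inner_eq_zero_iff inner_ge_zero order_antisym)
    then have "norm a *\<^sub>R m = r *\<^sub>R a" by (simp add: u_def)
    then have "(1 / norm a) *\<^sub>R (norm a *\<^sub>R m) = (1 / norm a) *\<^sub>R (r *\<^sub>R a)" by simp
    then show ?thesis using na0 by simp
  qed
  define t where "t = inner a z / inner a a"
  define v where "v = z - t *\<^sub>R a"
  have aa: "inner a a = (norm a)^2" by (simp add: power2_norm_eq_inner)
  have aa0: "inner a a > 0" using a0 by simp
  have av: "inner a v = 0" using aa0 by (simp add: v_def t_def inner_diff_right)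
  have zdec: "z = t *\<^sub>R a + v" by (simp add: v_def)
  define \<tau> where "\<tau> = t * norm a"
  have nz2: "(norm z)^2 = \<tau>^2 + (norm v)^2"
  proof -
    have "(norm z)^2 = inner (t *\<^sub>R a + v) (t *\<^sub>R a + v)" using zdec by (simp add: power2_norm_eq_inner)
    also have "\<dots> = t^2 * inner a a + 2 * t * inner a v + inner v v"
      by (simp add: inner_add_left inner_add_right inner_commute[of v a] power2_eq_square algebra_simps)
    also have "\<dots> = \<tau>^2 + (norm v)^2" using av aa by (simp add: \<tau>_def power2_norm_eq_inner power_mult_distrib)
    finally show ?thesis .
  qed
  have imz: "inner m z = r * \<tau>"
  proof -
    have "inner m z = (r / norm a) * inner a z" by (simp add: mpar)
    also have "inner a z = t * (norm a)^2" using aa aa0 by (simp add: t_def)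
    finally show ?thesis using na0 by (simp add: \<tau>_def power2_eq_square)
  qed
  have Gt: "r * (norm z - \<tau>) \<le> G" using Gz imz by (simp add: algebra_simps)
  have tz: "\<bar>\<tau>\<bar> \<le> norm z"
  proof -
    have "\<tau>^2 \<le> (norm z)^2" using nz2 by simp
    then show ?thesis by (metis abs_le_square_iff abs_norm_cancel)
  qed
  have aux: "(norm v)^2 \<le> (norm z - \<tau>) * (2 * R)"
  proof -
    have "(norm v)^2 = (norm z - \<tau>) * (norm z + \<tau>)" using nz2 by (simp add: algebra_simps power2_eq_square)
    also have "\<dots> \<le> (norm z - \<tau>) * (2 * R)"
      using tz nz by (intro mult_left_mono) auto
    finally show ?thesis .
  qed
  have Gv: "r * (norm v)^2 \<le> 2 * R * G"
  proof -
    have "r * (norm v)^2 \<le> r * ((norm z - \<tau>) * (2 * R))" using aux r0 by (intro mult_left_mono) auto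
    also have "\<dots> = 2 * R * (r * (norm z - \<tau>))" by (simp add: algebra_simps)
    also have "\<dots> \<le> 2 * R * G" using Gt R0 by (intro mult_left_mono) auto
    finally show ?thesis .
  qed
  have G0: "G \<ge> 0"
  proof -
    have "0 \<le> r * (norm v)^2" using r0 by simp
    then have "0 \<le> 2 * R * G" using Gv by linarith
    then show ?thesis using R0 by (simp add: zero_le_mult_iff)
  qed
  have tb: "t - 1 = - G - omega b0 v"
  proof -
    have "omega b0 z = t + omega b0 v" using zdec ba by simp
    then show ?thesis by (simp add: G_def)
  qed
  have ob0v: "\<bar>omega b0 v\<bar> \<le> R * norm v"
    using omega_bound[of b0 v] nb0 by (meson mult_right_mono norm_ge_zero order_trans)
  have t1: "\<bar>t - 1\<bar> \<le> G + R * norm v" using tb ob0v G0 by linarith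
  have za: "norm (z - a) \<le> R * G + K * norm v"
  proof -
    have "z - a = (t - 1) *\<^sub>R a + v" using zdec by (simp add: algebra_simps)
    then have "norm (z - a) \<le> \<bar>t - 1\<bar> * norm a + norm v"
      by (metis norm_scaleR norm_triangle_ineq)
    also have "\<bar>t - 1\<bar> * norm a \<le> (G + R * norm v) * R"
      using t1 na by (intro mult_mono) auto
    finally show ?thesis by (simp add: K_def algebra_simps power2_eq_square)
  qed
  have GE: "G \<le> norm (z - a) * norm E"
  proof -
    have "G \<le> (1 + s) * G" using G0 s0 by (simp add: algebra_simps)
    then show ?thesis using h4 Go0 by (simp add: G_def)
  qed
  have G2: "G \<le> 2 * K * norm v * norm E"
  proof -
    have "norm (z - a) * norm E \<le> (R * G + K * norm v) * norm E" using za by (intro mult_right_mono) auto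
    also have "\<dots> = G * (R * norm E) + K * norm v * norm E" by (simp add: algebra_simps)
    also have "G * (R * norm E) \<le> G * (1/2)" using E1 G0 by (intro mult_left_mono) auto
    finally show ?thesis using GE by linarith
  qed
  have za2: "norm (z - a) \<le> 2 * K * norm v"
  proof -
    have "R * G \<le> R * (2 * K * norm v * norm E)" using G2 R0 by (intro mult_left_mono) auto
    also have "\<dots> = 2 * K * norm v * (R * norm E)" by (simp add: algebra_simps)
    also have "\<dots> \<le> 2 * K * norm v * (1/2)" using E1 K0 by (intro mult_left_mono) auto
    finally show ?thesis using za by linarith
  qed
  have vE: "r * norm v \<le> 4 * R * K * norm E"
  proof (cases "v = 0")
    case True then show ?thesis using R0 K0 by simp
  next
    case False
    then have nv: "norm v > 0" by simp
    have "(r * norm v) * norm v = r * (norm v)^2" by (simp add: power2_eq_square)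
    also have "\<dots> \<le> 2 * R * G" by (rule Gv)
    also have "\<dots> \<le> 2 * R * (2 * K * norm v * norm E)" using G2 R0 by (intro mult_left_mono) auto
    also have "\<dots> = (4 * R * K * norm E) * norm v" by (simp add: algebra_simps)
    finally show ?thesis using nv by (simp add: mult_le_cancel_right_pos)
  qed
  have zaE: "r * norm (z - a) \<le> 8 * R * K^2 * norm E"
  proof -
    have "r * norm (z - a) \<le> r * (2 * K * norm v)" using za2 r0 by (intro mult_left_mono) auto
    also have "\<dots> = 2 * K * (r * norm v)" by (simp add: algebra_simps)
    also have "\<dots> \<le> 2 * K * (4 * R * K * norm E)" using vE K0 by (intro mult_left_mono) auto
    finally show ?thesis by (simp add: power2_eq_square algebra_simps)
  qed
  then have zaE': "norm (z - a) \<le> 8 * R * K^2 * norm E / r" using r0 by (simp add: pos_le_divide_eq mult.commute)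
  have "s \<le> R * norm E + R * norm (z - a)" using h5 Go0 by (simp add: algebra_simps)
  also have "R * norm (z - a) \<le> R * (8 * R * K^2 * norm E / r)" using zaE' R0 by (intro mult_left_mono) auto
  also have "R * norm E + R * (8 * R * K^2 * norm E / r) = R * (1 + 8 * K^2 * R / r) * norm E"
    by (simp add: algebra_simps)
  finally show False using E2 by (simp add: K_def)
qed

lemma inner_ball:
  assumes c2: "C2_boundary X" and b0: "b0 \<in> frontier X"
  shows "\<exists>c r. r > 0 \<and> cball c r \<subseteq> X \<and> dist b0 c = r"
proof -
  have ex: "\<exists>U (g :: complex ^ 'n \<Rightarrow> real). open U \<and> b0 \<in> U \<and> C2_on U g \<and>
      (\<forall>z\<in>U. \<forall>D. (g has_derivative D) (at z) \<longrightarrow> D \<noteq> (\<lambda>h. 0)) \<and>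
      X \<inter> U = {z\<in>U. g z \<le> 0}"
    using c2 b0 unfolding boundary_with_def by (rule bspec)
  obtain U where "\<exists>(g :: complex ^ 'n \<Rightarrow> real). open U \<and> b0 \<in> U \<and> C2_on U g \<and>
      (\<forall>z\<in>U. \<forall>D. (g has_derivative D) (at z) \<longrightarrow> D \<noteq> (\<lambda>h. 0)) \<and>
      X \<inter> U = {z\<in>U. g z \<le> 0}" using ex by (rule exE)
  then obtain g :: "complex ^ 'n \<Rightarrow> real" where A: "open U \<and> b0 \<in> U \<and> C2_on U g \<and>
      (\<forall>z\<in>U. \<forall>D. (g has_derivative D) (at z) \<longrightarrow> D \<noteq> (\<lambda>h. 0)) \<and>
      X \<inter> U = {z\<in>U. g z \<le> 0}" by (rule exE)
  from A have U1: "open U" by (elim conjE)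
  from A have U2: "b0 \<in> U" by (elim conjE)
  note U = U1 U2
  from A have C: "C2_on U g" by (elim conjE)
  from A have nz: "\<forall>z\<in>U. \<forall>D. (g has_derivative D) (at z) \<longrightarrow> D \<noteq> (\<lambda>h. 0)" by (elim conjE)
  from A have XU: "X \<inter> U = {z\<in>U. g z \<le> 0}" by (elim conjE)
  from C obtain F' where F'c: "(\<forall>z\<in>U. (g has_derivative F' z) (at z)) \<and> (\<forall>v. C1_on U (\<lambda>z. F' z v))"
    unfolding C2_on_def by (rule exE)
  then have F': "\<forall>z\<in>U. (g has_derivative F' z) (at z)" and F1: "\<forall>v. C1_on U (\<lambda>z. F' z v)"
    by (rule conjunct1, rule conjunct2)
  define Gr where "Gr = (\<lambda>z. \<Sum>b\<in>Basis. F' z b *\<^sub>R b)"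
  have Fr: "\<And>z h. z \<in> U \<Longrightarrow> F' z h = inner (Gr z) h"
  proof -
    fix z h assume zU: "z \<in> U"
    have gz: "(g has_derivative F' z) (at z)" using bspec[OF F' zU] .
    have "F' z h = inner (\<Sum>b\<in>Basis. F' z b *\<^sub>R b) h"
      by (rule gradient_repr[OF has_derivative_bounded_linear[OF gz]])
    then show "F' z h = inner (Gr z) h" by (simp only: Gr_def)
  qed
  have diffb: "\<And>b. (\<lambda>z. F' z b) differentiable (at b0)"
  proof -
    fix b
    have "C1_on U (\<lambda>z. F' z b)" using F1 by (rule spec)
    then obtain F'' where F''c: "(\<forall>z\<in>U. ((\<lambda>z. F' z b) has_derivative F'' z) (at z)) \<and>
        (\<forall>v. continuous_on U (\<lambda>z. F'' z v))"
      unfolding C1_on_def by (rule exE)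
    then have "\<forall>z\<in>U. ((\<lambda>z. F' z b) has_derivative F'' z) (at z)" by (rule conjunct1)
    then show "(\<lambda>z. F' z b) differentiable (at b0)" using U unfolding differentiable_def by blast
  qed
  have "Gr differentiable (at b0)"
    unfolding Gr_def by (rule differentiable_sum) (auto intro!: differentiable_scaleR diffb)
  then obtain DG where DG: "(Gr has_derivative DG) (at b0)" unfolding differentiable_def by (rule exE)
  obtain B where BB: "B > 0 \<and> (\<forall>h. norm (DG h) \<le> norm h * B)"
    using bounded_linear.pos_bounded[OF has_derivative_bounded_linear[OF DG]] by (rule exE)
  from BB have B0: "B > 0" by (rule conjunct1)
  from BB have Bb': "\<forall>h. norm (DG h) \<le> norm h * B" by (rule conjunct2)
  have Bb: "\<And>h. norm (DG h) \<le> norm h * B" using Bb' by (rule spec)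
  obtain d where d0: "d > 0" and dH: "\<And>y. norm (y - b0) < d \<Longrightarrow> norm (Gr y - Gr b0 - DG (y - b0)) \<le> 1 * norm (y - b0)"
    using deriv_approx[OF DG zero_less_one] by metis
  define L where "L = B + 1"
  have L0: "L > 0" using B0 by (simp add: L_def)
  have Lip: "\<And>y. norm (y - b0) < d \<Longrightarrow> norm (Gr y - Gr b0) \<le> L * norm (y - b0)"
  proof -
    fix y assume y: "norm (y - b0) < d"
    have "norm (Gr y - Gr b0) \<le> norm (Gr y - Gr b0 - DG (y - b0)) + norm (DG (y - b0))"
      by (metis diff_add_cancel norm_triangle_ineq)
    also have "\<dots> \<le> norm (y - b0) + norm (y - b0) * B" using dH[OF y] Bb[of "y - b0"] by simp
    finally show "norm (Gr y - Gr b0) \<le> L * norm (y - b0)" by (simp add: L_def algebra_simps)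
  qed
  obtain \<rho> where \<rho>0: "\<rho> > 0" and \<rho>U: "ball b0 \<rho> \<subseteq> U" using U open_contains_ball by blast
  define \<rho>1 where "\<rho>1 = min d \<rho>"
  have \<rho>10: "\<rho>1 > 0" using d0 \<rho>0 by (simp add: \<rho>1_def)
  have taylor: "\<And>z. norm (z - b0) < \<rho>1 \<Longrightarrow> g z \<le> g b0 + inner (Gr b0) (z - b0) + L * (norm (z - b0))^2"
  proof -
    fix z assume zn: "norm (z - b0) < \<rho>1"
    define h where "h = z - b0"
    define \<phi> where "\<phi> = (\<lambda>t::real. g (b0 + t *\<^sub>R h))"
    have inU: "\<And>t. 0 \<le> t \<Longrightarrow> t \<le> 1 \<Longrightarrow> b0 + t *\<^sub>R h \<in> U \<and> norm ((b0 + t *\<^sub>R h) - b0) < d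
         \<and> norm ((b0 + t *\<^sub>R h) - b0) \<le> norm h"
    proof -
      fix t :: real assume t: "0 \<le> t" "t \<le> 1"
      have "norm (t *\<^sub>R h) = t * norm h" using t by simp
      also have "\<dots> \<le> norm h" using t by (simp add: mult_left_le_one_le)
      finally have nth: "norm (t *\<^sub>R h) \<le> norm h" .
      then have "norm (t *\<^sub>R h) < \<rho>1" using zn by (simp add: h_def)
      then show "b0 + t *\<^sub>R h \<in> U \<and> norm ((b0 + t *\<^sub>R h) - b0) < d \<and> norm ((b0 + t *\<^sub>R h) - b0) \<le> norm h"
        using \<rho>U nth by (auto simp: \<rho>1_def dist_norm)
    qed
    have der: "\<And>t. 0 \<le> t \<Longrightarrow> t \<le> 1 \<Longrightarrow> DERIV \<phi> t :> F' (b0 + t *\<^sub>R h) h"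
    proof -
      fix t :: real assume t: "0 \<le> t" "t \<le> 1"
      have tU: "b0 + t *\<^sub>R h \<in> U" using inU[OF t] by (rule conjunct1)
      have gd: "(g has_derivative F' (b0 + t *\<^sub>R h)) (at (b0 + t *\<^sub>R h))" using bspec[OF F' tU] .
      have ld: "((\<lambda>t. b0 + t *\<^sub>R h) has_derivative (\<lambda>u. u *\<^sub>R h)) (at t)"
        by (auto intro!: derivative_eq_intros)
      have ch: "((g \<circ> (\<lambda>t. b0 + t *\<^sub>R h)) has_derivative (F' (b0 + t *\<^sub>R h) \<circ> (\<lambda>u. u *\<^sub>R h))) (at t)"
        by (rule diff_chain_at[OF ld gd])
      have lin: "linear (F' (b0 + t *\<^sub>R h))"
        using bounded_linear.linear[OF has_derivative_bounded_linear[OF gd]] .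
      have "F' (b0 + t *\<^sub>R h) \<circ> (\<lambda>u. u *\<^sub>R h) = (\<lambda>u. F' (b0 + t *\<^sub>R h) h * u)"
        using linear.scaleR[OF lin] by (auto simp: fun_eq_iff o_def mult.commute)
      then show "DERIV \<phi> t :> F' (b0 + t *\<^sub>R h) h"
        using ch unfolding has_field_derivative_def \<phi>_def by (simp add: o_def)
    qed
    obtain \<xi> where \<xi>: "0 < \<xi>" "\<xi> < 1" and mv: "\<phi> 1 - \<phi> 0 = (1 - 0) * F' (b0 + \<xi> *\<^sub>R h) h"
      using MVT2[of 0 1 \<phi> "\<lambda>t. F' (b0 + t *\<^sub>R h) h"] der by auto
    have iU: "b0 + \<xi> *\<^sub>R h \<in> U" and id: "norm ((b0 + \<xi> *\<^sub>R h) - b0) < d"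
      and ih: "norm ((b0 + \<xi> *\<^sub>R h) - b0) \<le> norm h" using inU \<xi> by auto
    have "F' (b0 + \<xi> *\<^sub>R h) h = inner (Gr (b0 + \<xi> *\<^sub>R h)) h" using Fr iU by simp
    also have "\<dots> = inner (Gr b0) h + inner (Gr (b0 + \<xi> *\<^sub>R h) - Gr b0) h" by (simp add: inner_diff_left)
    also have "\<dots> \<le> inner (Gr b0) h + norm (Gr (b0 + \<xi> *\<^sub>R h) - Gr b0) * norm h"
      using norm_cauchy_schwarz by simp
    also have "\<dots> \<le> inner (Gr b0) h + (L * norm h) * norm h"
    proof -
      have "norm (Gr (b0 + \<xi> *\<^sub>R h) - Gr b0) \<le> L * norm ((b0 + \<xi> *\<^sub>R h) - b0)" using Lip id by blast
      also have "\<dots> \<le> L * norm h" using ih L0 by (intro mult_left_mono) auto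
      finally have nn: "norm (Gr (b0 + \<xi> *\<^sub>R h) - Gr b0) \<le> L * norm h" .
      show ?thesis using nn by (intro add_left_mono mult_right_mono) auto
    qed
    finally have "\<phi> 1 - \<phi> 0 \<le> inner (Gr b0) h + (L * norm h) * norm h" using mv by simp
    then show "g z \<le> g b0 + inner (Gr b0) (z - b0) + L * (norm (z - b0))^2"
      by (simp add: \<phi>_def h_def power2_eq_square algebra_simps)
  qed
  have gb0: "g b0 \<le> 0" using XU fr_X[OF b0] U by blast
  define A where "A = norm (Gr b0)"
  have A0: "A > 0"
  proof -
    have "Gr b0 \<noteq> 0"
    proof
      assume "Gr b0 = 0"
      then have "F' b0 = (\<lambda>h. 0)" using Fr U by (simp add: fun_eq_iff)
      then show False using nz F' U by blast
    qed
    then show ?thesis by (simp add: A_def)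
  qed
  define r where "r = min (\<rho>1 / 3) (A / (2 * L))"
  have r0: "r > 0" using \<rho>10 A0 L0 by (simp add: r_def)
  have rL: "2 * (r / A) * L \<le> 1"
  proof -
    have "r \<le> A / (2 * L)" by (simp add: r_def)
    then have "r * (2 * L) \<le> A" using L0 by (simp add: pos_le_divide_eq)
    then show ?thesis using A0 by (simp add: field_simps)
  qed
  define c where "c = b0 - (r / A) *\<^sub>R Gr b0"
  have dc: "dist b0 c = r" using A0 r0 by (simp add: c_def dist_norm A_def)
  have "cball c r \<subseteq> X"
  proof
    fix z assume "z \<in> cball c r"
    then have zc: "norm (z - c) \<le> r" by (simp add: dist_norm norm_minus_commute)
    define h where "h = z - b0"
    define k where "k = r / A"
    have k0: "k > 0" using r0 A0 by (simp add: k_def)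
    have hz: "z - c = h + k *\<^sub>R Gr b0" by (simp add: h_def c_def k_def)
    have nh: "norm h \<le> 2 * r"
    proof -
      have "h = (z - c) - k *\<^sub>R Gr b0" using hz by simp
      then have "norm h \<le> norm (z - c) + norm (k *\<^sub>R Gr b0)" by (metis norm_triangle_ineq4)
      also have "norm (k *\<^sub>R Gr b0) = r" using A0 r0 by (simp add: k_def A_def)
      finally show ?thesis using zc by simp
    qed
    have "r \<le> \<rho>1 / 3" by (simp add: r_def)
    then have nh\<rho>: "norm h < \<rho>1" using nh \<rho>10 by linarith
    have expand: "(norm (z - c))^2 = (norm h)^2 + 2 * k * inner (Gr b0) h + r^2"
    proof -
      have "(norm (z - c))^2 = inner (h + k *\<^sub>R Gr b0) (h + k *\<^sub>R Gr b0)" using hz by (simp add: power2_norm_eq_inner)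
      also have "\<dots> = inner h h + 2 * k * inner (Gr b0) h + k^2 * inner (Gr b0) (Gr b0)"
        by (simp add: inner_add_left inner_add_right inner_commute[of h "Gr b0"] power2_eq_square algebra_simps)
      also have "\<dots> = (norm h)^2 + 2 * k * inner (Gr b0) h + k^2 * (norm (Gr b0))^2"
        by (simp only: power2_norm_eq_inner)
      also have "k^2 * (norm (Gr b0))^2 = r^2" using A0 by (simp add: k_def A_def power2_eq_square)
      finally show ?thesis .
    qed
    have "(norm (z - c))^2 \<le> r^2" using zc by (simp add: power_mono)
    then have q: "(norm h)^2 + 2 * k * inner (Gr b0) h \<le> 0" using expand by simp
    have ty: "g z \<le> inner (Gr b0) h + L * (norm h)^2" using taylor[of z] nh\<rho> gb0 by (simp add: h_def)
    have kL0: "2 * k * L \<le> 1" unfolding k_def by (rule rL)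
    have kL1: "2 * (k * L) \<le> 1" using kL0 by (simp only: mult.assoc)
    have kL: "k * L \<le> 1/2" using kL1 by linarith
    have "k * inner (Gr b0) h + (k * L) * (norm h)^2 \<le> k * inner (Gr b0) h + (1/2) * (norm h)^2"
      using kL by (intro add_left_mono mult_right_mono) auto
    also have "k * (inner (Gr b0) h + L * (norm h)^2) = k * inner (Gr b0) h + (k * L) * (norm h)^2"
      by (simp add: algebra_simps)
    ultimately have "k * (inner (Gr b0) h + L * (norm h)^2) \<le> 0" using q by linarith
    then have "inner (Gr b0) h + L * (norm h)^2 \<le> 0" using k0 by (simp add: mult_le_0_iff)
    then have gz: "g z \<le> 0" using ty by linarith
    have "z \<in> ball b0 \<rho>" using nh\<rho> by (simp add: dist_norm h_def norm_minus_commute \<rho>1_def)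
    then have "z \<in> U" using \<rho>U by blast
    then show "z \<in> X" using XU gz by blast
  qed
  then show ?thesis using r0 dc by blast
qed

end



context SP1 begin

lemma part1:
  assumes x: "x \<in> frontier X"
  shows "{x + t *\<^sub>R f x | t. True} \<inter> {x + f x | x. x \<in> frontier X} = {x + f x, x - f x}
         \<and> x + f x \<noteq> x - f x"
proof (intro conjI)
  have fneg: "- f x \<in> frontier X" "f (- f x) = x" using f_negf[OF x] by auto
  show "{x + t *\<^sub>R f x | t. True} \<inter> {x + f x | x. x \<in> frontier X} = {x + f x, x - f x}"
  proof (rule set_eqI, rule iffI)
    fix w assume "w \<in> {x + t *\<^sub>R f x | t. True} \<inter> {x + f x | x. x \<in> frontier X}"
    then obtain t x' where wt: "w = x + t *\<^sub>R f x" and x': "x' \<in> frontier X" and wx: "w = x' + f x'"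
      by blast
    then have "t = 1 \<or> t = -1" using line_t[OF x x'] by simp
    then show "w \<in> {x + f x, x - f x}" using wt by auto
  next
    fix w assume "w \<in> {x + f x, x - f x}"
    then consider "w = x + f x" | "w = x - f x" by blast
    then show "w \<in> {x + t *\<^sub>R f x | t. True} \<inter> {x + f x | x. x \<in> frontier X}"
    proof cases
      case 1
      have "w = x + 1 *\<^sub>R f x" using 1 by simp
      then show ?thesis using 1 x by blast
    next
      case 2
      have "w = x + (-1) *\<^sub>R f x" using 2 by simp
      moreover have "w = (- f x) + f (- f x)" using 2 fneg by simp
      ultimately show ?thesis using fneg by blast
    qed
  qed
  show "x + f x \<noteq> x - f x"
  proof
    assume "x + f x = x - f x"
    then have "f x + f x = 0" by (simp add: algebra_simps)
    then have "(2::real) *\<^sub>R f x = 0" by (simp add: scaleR_2)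
    then show False using f_nz[OF x] by simp
  qed
qed

lemma staticY:
  assumes R0: "R > 0" and RX: "\<forall>x\<in>X. norm x \<le> R"
    and x: "x \<in> frontier X"
    and ball: "cball c r \<subseteq> X" and r0: "r > 0" and db: "dist (- f x) c = r"
    and x1: "x1 \<in> frontier X" and s0: "s > 0"
    and eq: "x1 + f x1 = x + f x + s *\<^sub>R f x + E"
    and E1: "R * norm E \<le> 1/2"
    and E2: "R * (1 + 8 * (R^2 + 1)^2 * R / r) * norm E < s"
  shows False
proof -
  define y where "y = f x"
  define y1 where "y1 = f x1"
  have xX: "x \<in> X" and x1X: "x1 \<in> X" using fr_X x x1 by auto
  have yX: "y \<in> X" and oxy: "omega x y = 1" using f_prop[OF x] by (auto simp: y_def)
  have y1X: "y1 \<in> X" and ox1y1: "omega x1 y1 = 1" using f_prop[OF x1] by (auto simp: y1_def)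
  have y1e: "y1 = x + y + s *\<^sub>R y + E - x1" using eq by (simp add: y_def y1_def algebra_simps)
  define Go where "Go = 1 - omega x y1"
  have Go0: "Go \<ge> 0" using le1[OF xX y1X] by (simp add: Go_def)
  have A1: "omega (- y) x1 = omega x1 y" using omega_antisym[of y x1] by simp
  have A2: "omega x y1 = 1 + s + omega x E - omega x x1" using oxy by (simp add: y1e)
  have A3: "omega x1 x + omega x1 y + s * omega x1 y + omega x1 E = 1" using ox1y1 by (simp add: y1e)
  have A4: "omega x x1 = - omega x1 x" by (rule omega_antisym)
  have A5: "(1 + s) * (1 - omega x1 y) = 1 + s - omega x1 y - s * omega x1 y" by (simp add: algebra_simps)
  have id: "(1 + s) * (1 - omega (- y) x1) + Go = omega (x1 - x) E"
    using A1 A2 A3 A4 A5 by (simp add: Go_def)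
  have h4: "(1 + s) * (1 - omega (- y) x1) + Go \<le> norm (x1 - x) * norm E"
    using id omega_le[of "x1 - x" E] by simp
  have nx: "norm x \<le> R" using RX xX by blast
  have b1: "- omega x E \<le> R * norm E"
    using omega_bound[of x E] nx by (smt (verit, best) mult_right_mono norm_ge_zero)
  have b2: "omega x (x1 - x) \<le> R * norm (x1 - x)"
    using omega_le[of x "x1 - x"] nx by (smt (verit, best) mult_right_mono norm_ge_zero)
  have "omega x (x1 - x) = omega x x1" by simp
  then have h5: "Go \<le> - s + R * (norm E + norm (x1 - x))"
    using A2 b1 b2 by (simp add: Go_def algebra_simps)
  have ba: "omega (- y) x = 1" using oxy omega_antisym[of y x] by simp
  show False
    using core[OF R0 RX ball r0 _ xX ba x1X s0 Go0 h4 h5 E1 E2] db by (simp add: y_def)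
qed

lemma staticX:
  assumes R0: "R > 0" and RX: "\<forall>x\<in>X. norm x \<le> R"
    and x: "x \<in> frontier X"
    and ball: "cball c r \<subseteq> X" and r0: "r > 0" and db: "dist x c = r"
    and x1: "x1 \<in> frontier X" and s0: "s > 0"
    and eq: "x1 + f x1 = x + f x + s *\<^sub>R x + E"
    and E1: "R * norm E \<le> 1/2"
    and E2: "R * (1 + 8 * (R^2 + 1)^2 * R / r) * norm E < s"
  shows False
proof -
  define y where "y = f x"
  define y1 where "y1 = f x1"
  have xX: "x \<in> X" and x1X: "x1 \<in> X" using fr_X x x1 by auto
  have yX: "y \<in> X" and oxy: "omega x y = 1" using f_prop[OF x] by (auto simp: y_def)
  have y1X: "y1 \<in> X" and ox1y1: "omega x1 y1 = 1" using f_prop[OF x1] by (auto simp: y1_def)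
  have x1e: "x1 = x + y + s *\<^sub>R x + E - y1" using eq by (simp add: y_def y1_def algebra_simps)
  define Go where "Go = 1 - omega x1 y"
  have Go0: "Go \<ge> 0" using le1[OF x1X yX] by (simp add: Go_def)
  have B1: "omega x1 y = 1 + s + omega E y - omega y1 y" using oxy by (simp add: x1e)
  have B2: "omega x y1 + omega y y1 + s * omega x y1 + omega E y1 = 1" using ox1y1 by (simp add: x1e)
  have B3: "omega y1 y = - omega y y1" by (rule omega_antisym)
  have B5: "(1 + s) * (1 - omega x y1) = 1 + s - omega x y1 - s * omega x y1" by (simp add: algebra_simps)
  have id: "(1 + s) * (1 - omega x y1) + Go = omega E (y1 - y)"
    using B1 B2 B3 B5 by (simp add: Go_def)
  have h4: "(1 + s) * (1 - omega x y1) + Go \<le> norm (y1 - y) * norm E"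
    using id omega_le[of E "y1 - y"] by (simp add: mult.commute)
  have ny: "norm y \<le> R" using RX yX by blast
  have b1: "- omega E y \<le> R * norm E"
    using omega_bound[of E y] ny by (smt (verit, best) mult_left_mono norm_ge_zero mult.commute)
  have b2: "omega (y1 - y) y \<le> R * norm (y1 - y)"
    using omega_le[of "y1 - y" y] ny by (smt (verit, best) mult_left_mono norm_ge_zero mult.commute)
  have "omega (y1 - y) y = omega y1 y" by simp
  then have h5: "Go \<le> - s + R * (norm E + norm (y1 - y))"
    using B1 b1 b2 by (simp add: Go_def algebra_simps)
  show False
    using core[OF R0 RX ball r0 db yX oxy y1X s0 Go0 h4 h5 E1 E2] .
qed

lemma curve:
  assumes d: "d \<in> tangent_space {x + f x | x. x \<in> frontier X} p" and e: "\<epsilon> > 0"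
  shows "\<exists>\<sigma>>0. \<sigma> \<le> 1 \<and> (\<forall>s\<in>{\<sigma>, -\<sigma>}. \<exists>x1 E. x1 \<in> frontier X \<and>
            x1 + f x1 = p + s *\<^sub>R d + E \<and> norm E \<le> \<epsilon> * \<sigma>)"
proof -
  have "\<exists>\<gamma> e. e > 0 \<and> \<gamma> 0 = p \<and> (\<forall>t\<in>{-e<..<e}. \<gamma> t \<in> {x + f x | x. x \<in> frontier X}) \<and>
        (\<gamma> has_vector_derivative d) (at 0)"
    using d unfolding tangent_space_def by (rule CollectD)
  then obtain \<gamma> where "\<exists>e. e > 0 \<and> \<gamma> 0 = p \<and> (\<forall>t\<in>{-e<..<e}. \<gamma> t \<in> {x + f x | x. x \<in> frontier X}) \<and>
        (\<gamma> has_vector_derivative d) (at 0)" by (rule exE)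
  then obtain e0 where A: "e0 > 0 \<and> \<gamma> 0 = p \<and> (\<forall>t\<in>{-e0<..<e0}. \<gamma> t \<in> {x + f x | x. x \<in> frontier X}) \<and>
        (\<gamma> has_vector_derivative d) (at 0)" by (rule exE)
  from A have e0: "e0 > 0" by (elim conjE)
  from A have g0: "\<gamma> 0 = p" by (elim conjE)
  from A have gY: "\<forall>t\<in>{-e0<..<e0}. \<gamma> t \<in> {x + f x | x. x \<in> frontier X}" by (elim conjE)
  from A have gd: "(\<gamma> has_vector_derivative d) (at 0)" by (elim conjE)
  have "(\<gamma> has_derivative (\<lambda>t. t *\<^sub>R d)) (at 0)" using gd by (simp add: has_vector_derivative_def)
  from deriv_approx[OF this e] obtain \<delta> where \<delta>0: "\<delta> > 0"
    and dH: "\<And>y. norm (y - 0) < \<delta> \<Longrightarrow> norm (\<gamma> y - \<gamma> 0 - (y - 0) *\<^sub>R d) \<le> \<epsilon> * norm (y - 0)"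
    by metis
  define \<sigma> where "\<sigma> = min (min \<delta> e0) 1 / 2"
  have \<sigma>0: "\<sigma> > 0" using \<delta>0 e0 by (simp add: \<sigma>_def)
  have \<sigma>1: "\<sigma> \<le> 1" by (simp add: \<sigma>_def)
  have "\<forall>s\<in>{\<sigma>, -\<sigma>}. \<exists>x1 E. x1 \<in> frontier X \<and> x1 + f x1 = p + s *\<^sub>R d + E \<and> norm E \<le> \<epsilon> * \<sigma>"
  proof
    fix s assume s: "s \<in> {\<sigma>, -\<sigma>}"
    then have as: "\<bar>s\<bar> = \<sigma>" using \<sigma>0 by auto
    have "\<sigma> < \<delta>" "\<sigma> < e0" using \<delta>0 e0 by (auto simp: \<sigma>_def)
    then have sd: "norm (s - 0) < \<delta>" and se: "s \<in> {-e0<..<e0}" using as by auto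
    obtain x1 where x1: "x1 \<in> frontier X" and gs: "\<gamma> s = x1 + f x1" using gY se by blast
    define E where "E = \<gamma> s - \<gamma> 0 - s *\<^sub>R d"
    have "norm E \<le> \<epsilon> * \<sigma>" using dH[OF sd] as by (simp add: E_def)
    moreover have "x1 + f x1 = p + s *\<^sub>R d + E" using gs g0 by (simp add: E_def)
    ultimately show "\<exists>x1 E. x1 \<in> frontier X \<and> x1 + f x1 = p + s *\<^sub>R d + E \<and> norm E \<le> \<epsilon> * \<sigma>"
      using x1 by blast
  qed
  then show ?thesis using \<sigma>0 \<sigma>1 by blast
qed

lemma part2:
  assumes c2: "C2_boundary X" and x: "x \<in> frontier X"
  shows "transversal_line_at {x + f x | x. x \<in> frontier X} (x + f x) (f x) \<and>
         transversal_line_at {x + f x | x. x \<in> frontier X} (x - f x) (f x)"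
proof -
  define Y where "Y = {x + f x | x. x \<in> frontier X}"
  define y where "y = f x"
  have P1: "x + y \<in> Y" "x - y \<in> Y" using part1[OF x] by (auto simp: Y_def y_def)
  obtain R where R0: "R > 0" and RX: "\<forall>x\<in>X. norm x \<le> R" using boundX by blast
  have yfr: "- y \<in> frontier X" and fny: "f (- y) = x" using f_negf[OF x] by (auto simp: y_def)
  obtain c r where r0: "r > 0" and ball: "cball c r \<subseteq> X" and db: "dist (- y) c = r"
    using inner_ball[OF c2 yfr] by blast
  define C where "C = R * (1 + 8 * (R^2 + 1)^2 * R / r)"
  have C0: "C \<ge> 0" using R0 r0 by (simp add: C_def)
  define \<epsilon> where "\<epsilon> = 1 / (2 * (C + R + 1))"
  have \<epsilon>0: "\<epsilon> > 0" using C0 R0 by (simp add: \<epsilon>_def)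
  have \<epsilon>R: "R * \<epsilon> \<le> 1/2" using C0 R0 by (simp add: \<epsilon>_def field_simps)
  have \<epsilon>C: "C * \<epsilon> < 1" using C0 R0 by (simp add: \<epsilon>_def field_simps)
  have Ebounds: "\<And>(E :: complex ^ 'n) \<sigma>. 0 < \<sigma> \<Longrightarrow> \<sigma> \<le> 1 \<Longrightarrow> norm E \<le> \<epsilon> * \<sigma> \<Longrightarrow>
      R * norm E \<le> 1/2 \<and> R * (1 + 8 * (R^2 + 1)^2 * R / r) * norm E < \<sigma>"
  proof -
    fix E :: "complex ^ 'n" and \<sigma> :: real
    assume s: "0 < \<sigma>" "\<sigma> \<le> 1" "norm E \<le> \<epsilon> * \<sigma>"
    have "R * norm E \<le> R * (\<epsilon> * \<sigma>)" using s R0 by (intro mult_left_mono) auto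
    also have "\<dots> \<le> R * \<epsilon>" using s R0 \<epsilon>0 by (simp add: mult_left_le)
    finally have 1: "R * norm E \<le> 1/2" using \<epsilon>R by simp
    have "C * norm E \<le> C * (\<epsilon> * \<sigma>)" using s C0 by (intro mult_left_mono) auto
    also have "\<dots> = (C * \<epsilon>) * \<sigma>" by simp
    also have "\<dots> < 1 * \<sigma>" using \<epsilon>C s by (intro mult_strict_right_mono) auto
    finally show "R * norm E \<le> 1/2 \<and> R * (1 + 8 * (R^2 + 1)^2 * R / r) * norm E < \<sigma>"
      using 1 by (simp add: C_def)
  qed
  have T1: "y \<notin> tangent_space Y (x + y)"
  proof
    assume "y \<in> tangent_space Y (x + y)"
    then obtain \<sigma> where \<sigma>: "\<sigma> > 0" "\<sigma> \<le> 1" and H: "\<forall>s\<in>{\<sigma>, -\<sigma>}. \<exists>x1 E. x1 \<in> frontier X \<and>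
            x1 + f x1 = (x + y) + s *\<^sub>R y + E \<and> norm E \<le> \<epsilon> * \<sigma>"
      using curve[OF _ \<epsilon>0] unfolding Y_def by blast
    then obtain x1 E where x1: "x1 \<in> frontier X" and eq: "x1 + f x1 = (x + y) + \<sigma> *\<^sub>R y + E"
      and nE: "norm E \<le> \<epsilon> * \<sigma>" by blast
    have eq': "x1 + f x1 = x + f x + \<sigma> *\<^sub>R f x + E" using eq by (simp add: y_def)
    have db': "dist (- f x) c = r" using db by (simp add: y_def)
    show False using staticY[OF R0 RX x ball r0 db' x1 \<sigma>(1) eq'] Ebounds[OF \<sigma> nE] by blast
  qed
  have T2: "y \<notin> tangent_space Y (x - y)"
  proof
    assume "y \<in> tangent_space Y (x - y)"
    then obtain \<sigma> where \<sigma>: "\<sigma> > 0" "\<sigma> \<le> 1" and H: "\<forall>s\<in>{\<sigma>, -\<sigma>}. \<exists>x1 E. x1 \<in> frontier X \<and>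
            x1 + f x1 = (x - y) + s *\<^sub>R y + E \<and> norm E \<le> \<epsilon> * \<sigma>"
      using curve[OF _ \<epsilon>0] unfolding Y_def by blast
    then obtain x1 E where x1: "x1 \<in> frontier X" and eq: "x1 + f x1 = (x - y) + (- \<sigma>) *\<^sub>R y + E"
      and nE: "norm E \<le> \<epsilon> * \<sigma>" by blast
    have eq': "x1 + f x1 = (- y) + f (- y) + \<sigma> *\<^sub>R (- y) + E" using eq fny by (simp add: algebra_simps)
    show False using staticX[OF R0 RX yfr ball r0 db x1 \<sigma>(1) eq'] Ebounds[OF \<sigma> nE] by blast
  qed
  show ?thesis using P1 T1 T2 unfolding transversal_line_at_def Y_def y_def by blast
qed

end

theorem lemma4p3:
  fixes X :: "(complex ^ 'n) set"
  assumes "convex_body X"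
    and "0 \<in> interior X"
    and "sympolar X = X"
    and "C1_boundary X"
  defines "Y \<equiv> {x + sym_f X x | x. x \<in> frontier X}"
  shows "(\<forall>x\<in>frontier X.
           {x + t *\<^sub>R sym_f X x | t. True} \<inter> Y = {x + sym_f X x, x - sym_f X x}
           \<and> x + sym_f X x \<noteq> x - sym_f X x)
         \<and> (C2_boundary X \<longrightarrow> (\<forall>x\<in>frontier X.
           transversal_line_at Y (x + sym_f X x) (sym_f X x) \<and>
           transversal_line_at Y (x - sym_f X x) (sym_f X x)))"
proof -
  interpret SP1 X
    using assms by (unfold_locales) auto
  show ?thesis unfolding Y_def using part1 part2 by blast
qed


end
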